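(* Let $(X,\mathscr{R},g)$ be a closed reversible reaction network with reaction energies $g\in\mathbb{R}^{\mathscr{R}}$. Then $(X,\mathscr{R},g)$ is thermodynamic if and only if it contains no perpetuum mobile.
   Context: A reaction network (RN) $(X,\mathscr{R})$ consists of a finite non-empty set $X$ of species and a finite non-empty set $\mathscr{R}$ of reactions. Each reaction $r$ is given by stoichiometric coefficients $s^-_{xr},s^+_{xr}\in\mathbb{N}_0$. The stoichiometric matrix $S\in\mathbb{Z}^{X\times\mathscr{R}}$ has entries $S_{xr}=s^+_{xr}-s^-_{xr}$. The RN is closed if every reaction $r$ has $x,y$ with $S_{xr}<0<S_{yr}$. The reverse $\bar r$ of $r$ has $s^-_{x\bar r}=s^+_{xr}$ and $s^+_{x\bar r}=s^-_{xr}$. The RN is reversible if $r\in\mathscr{R}$ implies $\bar r\in\mathscr{R}$. $(X,\mathscr{R},g)$ is thermodynamic if $g\in(\ker S)^\perp$. A perpetuum mobile is a vector $v\in\mathbb{R}^{\mathscr{R}}$ with all of the following: - $v\ge0$ and $v\ne0$; - $Sv=0$; - $\langle g,v\rangle\neq0$. *)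

theory Defs
  imports Main "HOL-Library.Multiset" Complex_Main
begin

text \<open>A reaction is given by its stoichiometric coefficients (s^-, s^+) on the species.
  Reactions are identified with their coefficient pairs.\<close>
type_synonym 'x reaction = "('x \<Rightarrow> nat) \<times> ('x \<Rightarrow> nat)"

definition reactants :: "'x reaction \<Rightarrow> 'x \<Rightarrow> nat" where
  "reactants r = fst r"

definition products :: "'x reaction \<Rightarrow> 'x \<Rightarrow> nat" where
  "products r = snd r"

definition reaction_network :: "'x set \<Rightarrow> 'x reaction set \<Rightarrow> bool" where
  "reaction_network X R \<longleftrightarrow> finite X \<and> X \<noteq> {} \<and> finite R \<and> R \<noteq> {} \<and>
     (\<forall>r\<in>R. \<forall>x. x \<notin> X \<longrightarrow> reactants r x = 0 \<and> products r x = 0)"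

definition stoich :: "'x reaction \<Rightarrow> 'x \<Rightarrow> int" where
  "stoich r x = int (products r x) - int (reactants r x)"

definition closed_RN :: "'x set \<Rightarrow> 'x reaction set \<Rightarrow> bool" where
  "closed_RN X R \<longleftrightarrow> (\<forall>r\<in>R. \<exists>x\<in>X. \<exists>y\<in>X. stoich r x < 0 \<and> 0 < stoich r y)"

definition reverse_reaction :: "'x reaction \<Rightarrow> 'x reaction" where
  "reverse_reaction r = (products r, reactants r)"

definition reversible_RN :: "'x reaction set \<Rightarrow> bool" where
  "reversible_RN R \<longleftrightarrow> (\<forall>r\<in>R. reverse_reaction r \<in> R)"

definition in_ker_S :: "'x set \<Rightarrow> 'x reaction set \<Rightarrow> ('x reaction \<Rightarrow> real) \<Rightarrow> bool" where
  "in_ker_S X R v \<longleftrightarrow> (\<forall>x\<in>X. (\<Sum>r\<in>R. real_of_int (stoich r x) * v r) = 0)"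

definition inner_R :: "'x reaction set \<Rightarrow> ('x reaction \<Rightarrow> real) \<Rightarrow> ('x reaction \<Rightarrow> real) \<Rightarrow> real" where
  "inner_R R g v = (\<Sum>r\<in>R. g r * v r)"

definition thermodynamic :: "'x set \<Rightarrow> 'x reaction set \<Rightarrow> ('x reaction \<Rightarrow> real) \<Rightarrow> bool" where
  "thermodynamic X R g \<longleftrightarrow> (\<forall>v. in_ker_S X R v \<longrightarrow> inner_R R g v = 0)"

definition perpetuum_mobile :: "'x set \<Rightarrow> 'x reaction set \<Rightarrow> ('x reaction \<Rightarrow> real) \<Rightarrow> ('x reaction \<Rightarrow> real) \<Rightarrow> bool" where
  "perpetuum_mobile X R g v \<longleftrightarrow>
     (\<forall>r\<in>R. v r \<ge> 0) \<and> (\<exists>r\<in>R. v r \<noteq> 0) \<and> in_ker_S X R v \<and> inner_R R g v \<noteq> 0"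

end

theory Submission
  imports Defs
begin

lemma rev_rev[simp]: "reverse_reaction (reverse_reaction r) = r"
  by (simp add: reverse_reaction_def reactants_def products_def)

lemma stoich_rev[simp]: "stoich (reverse_reaction r) x = - stoich r x"
  by (simp add: reverse_reaction_def reactants_def products_def stoich_def)

lemma sum_rev:
  assumes "reversible_RN R"
  shows "(\<Sum>r\<in>R. f (reverse_reaction r)) = (\<Sum>r\<in>R. f r)"
proof -
  have b: "bij_betw reverse_reaction R R"
    using assms unfolding reversible_RN_def
    by (intro bij_betw_byWitness[where f'=reverse_reaction]) auto
  show ?thesis using sum.reindex_bij_betw[OF b, of f] by simp
qed

theorem proposition2:
  fixes X :: "'x set" and R :: "'x reaction set" and g :: "'x reaction \<Rightarrow> real"
  assumes "reaction_network X R"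
    and "closed_RN X R"
    and "reversible_RN R"
  shows "thermodynamic X R g \<longleftrightarrow> \<not> (\<exists>v. perpetuum_mobile X R g v)"
proof
  assume "thermodynamic X R g"
  then show "\<not> (\<exists>v. perpetuum_mobile X R g v)"
    unfolding thermodynamic_def perpetuum_mobile_def by blast
next
  assume npm: "\<not> (\<exists>v. perpetuum_mobile X R g v)"
  have fin: "finite R" using assms(1) unfolding reaction_network_def by blast
  have key: "inner_R R g w = 0" if w0: "\<forall>r\<in>R. w r \<ge> 0" and wk: "in_ker_S X R w" for w
  proof (cases "\<exists>r\<in>R. w r \<noteq> 0")
    case True
    then show ?thesis using npm w0 wk unfolding perpetuum_mobile_def by blast
  next
    case False
    then show ?thesis unfolding inner_R_def by simp
  qed
  have neq: "reverse_reaction r \<noteq> r" if "r \<in> R" for r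
  proof
    assume e: "reverse_reaction r = r"
    from assms(2) that obtain x where "stoich r x < 0" unfolding closed_RN_def by blast
    moreover have "stoich (reverse_reaction r) x = stoich r x" using e by simp
    ultimately show False by simp
  qed
  have antisym: "g (reverse_reaction r) = - g r" if rR: "r \<in> R" for r
  proof -
    define u where "u = (\<lambda>s. if s = r \<or> s = reverse_reaction r then (1::real) else 0)"
    have rr: "reverse_reaction r \<in> R" using assms(3) rR unfolding reversible_RN_def by blast
    have ne: "reverse_reaction r \<noteq> r" using neq rR .
    have sumu: "(\<Sum>s\<in>R. h s * u s) = h r + h (reverse_reaction r)" for h :: "_ \<Rightarrow> real"
    proof -
      have "(\<Sum>s\<in>R. h s * u s) = (\<Sum>s\<in>{r, reverse_reaction r}. h s)"
        using fin rR rr unfolding u_def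
        by (simp add: if_distrib sum.inter_filter[symmetric] cong: if_cong)
           (rule sum.cong, auto)
      then show ?thesis using ne by simp
    qed
    have "in_ker_S X R u" unfolding in_ker_S_def
      using sumu[of "\<lambda>s. real_of_int (stoich s _)"] by simp
    moreover have "\<forall>s\<in>R. u s \<ge> 0" unfolding u_def by simp
    ultimately have "inner_R R g u = 0" using key by blast
    then show ?thesis unfolding inner_R_def using sumu[of g] by simp
  qed
  show "thermodynamic X R g" unfolding thermodynamic_def
  proof (intro allI impI)
    fix v assume vk: "in_ker_S X R v"
    define P where "P = (\<lambda>r. max (v r) 0)"
    define N where "N = (\<lambda>r. max (- v r) 0)"
    have vPN: "v r = P r - N r" for r unfolding P_def N_def by simp
    define w where "w = (\<lambda>r. P r + N (reverse_reaction r))"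
    have w0: "\<forall>r\<in>R. w r \<ge> 0" unfolding w_def P_def N_def by simp
    have swap: "(\<Sum>r\<in>R. h r * N (reverse_reaction r)) = (\<Sum>r\<in>R. h (reverse_reaction r) * N r)"
      for h :: "_ \<Rightarrow> real"
      using sum_rev[OF assms(3), of "\<lambda>r. h (reverse_reaction r) * N r"] by simp
    have "in_ker_S X R w" unfolding in_ker_S_def
    proof
      fix x assume "x \<in> X"
      have "(\<Sum>r\<in>R. real_of_int (stoich r x) * w r)
          = (\<Sum>r\<in>R. real_of_int (stoich r x) * P r) + (\<Sum>r\<in>R. real_of_int (stoich r x) * N (reverse_reaction r))"
        unfolding w_def by (simp add: distrib_left sum.distrib)
      also have "\<dots> = (\<Sum>r\<in>R. real_of_int (stoich r x) * P r) - (\<Sum>r\<in>R. real_of_int (stoich r x) * N r)"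
        using swap[of "\<lambda>r. real_of_int (stoich r x)"] by (simp add: sum_negf)
      also have "\<dots> = (\<Sum>r\<in>R. real_of_int (stoich r x) * v r)"
        by (simp add: vPN right_diff_distrib sum_subtractf)
      also have "\<dots> = 0" using vk \<open>x \<in> X\<close> unfolding in_ker_S_def by blast
      finally show "(\<Sum>r\<in>R. real_of_int (stoich r x) * w r) = 0" .
    qed
    then have "inner_R R g w = 0" using key w0 by blast
    moreover have "inner_R R g w = inner_R R g v"
    proof -
      have "inner_R R g w = (\<Sum>r\<in>R. g r * P r) + (\<Sum>r\<in>R. g r * N (reverse_reaction r))"
        unfolding inner_R_def w_def by (simp add: distrib_left sum.distrib)
      also have "(\<Sum>r\<in>R. g r * N (reverse_reaction r)) = (\<Sum>r\<in>R. g (reverse_reaction r) * N r)"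
        by (rule swap)
      also have "\<dots> = (\<Sum>r\<in>R. - g r * N r)"
        by (rule sum.cong) (auto simp: antisym)
      finally show ?thesis
        unfolding inner_R_def by (simp add: vPN right_diff_distrib sum_subtractf sum_negf)
    qed
    ultimately show "inner_R R g v = 0" by simp
  qed
qed

end
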